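(* The set of $G\in\mathcal{T}$ such that the group $(\mathbb{N},G)$ is isomorphic to $(\mathbb{Q},+)$ is comeager in $\mathcal{T}$.
   Context: Let $\mathbb{N}^{\mathbb{N}\times\mathbb{N}}$ be the space of functions $\mathbb{N}\times\mathbb{N}\to\mathbb{N}$ with the product of discrete topologies (a Polish space). Let $\mathcal{A}=\{G\in\mathbb{N}^{\mathbb{N}\times\mathbb{N}}: G \text{ is an abelian group operation on } \mathbb{N} \text{ with identity element } 0\}$ and $\mathcal{T}=\{G\in\mathcal{A}: (\mathbb{N},G)\text{ is torsion-free}\}$, with the subspace topology; $\mathcal{T}$ is a Polish space (the space of countably infinite torsion-free abelian groups). Comeager means: complement is a countable union of nowhere dense sets. *)

theory Defs
  imports "HOL-Analysis.Analysis"
begin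

text \<open>The space of binary operations on nat carries the product topology
 (Function_Topology instance for the function type) of the discrete
 topology on nat (nat's metric topology is discrete).\<close>

definition is_abgroup_op :: "(nat \<times> nat \<Rightarrow> nat) \<Rightarrow> bool" where
  "is_abgroup_op G \<longleftrightarrow>
     (\<forall>a b c. G (G (a, b), c) = G (a, G (b, c))) \<and>
     (\<forall>a b. G (a, b) = G (b, a)) \<and>
     (\<forall>a. G (0, a) = a) \<and>
     (\<forall>a. \<exists>b. G (a, b) = 0)"

primrec gmult :: "(nat \<times> nat \<Rightarrow> nat) \<Rightarrow> nat \<Rightarrow> nat \<Rightarrow> nat" where
  "gmult G 0 a = 0"
| "gmult G (Suc n) a = G (a, gmult G n a)"

definition torsion_free_op :: "(nat \<times> nat \<Rightarrow> nat) \<Rightarrow> bool" where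
  "torsion_free_op G \<longleftrightarrow> (\<forall>a n. a \<noteq> 0 \<and> n > 0 \<longrightarrow> gmult G n a \<noteq> 0)"

definition TFAb :: "(nat \<times> nat \<Rightarrow> nat) set" where
  "TFAb = {G. is_abgroup_op G \<and> torsion_free_op G}"

definition nowhere_dense_in :: "'a topology \<Rightarrow> 'a set \<Rightarrow> bool" where
  "nowhere_dense_in X S \<longleftrightarrow> X interior_of (X closure_of S) = {}"

definition comeager_in :: "'a topology \<Rightarrow> 'a set \<Rightarrow> bool" where
  "comeager_in X A \<longleftrightarrow>
     (\<exists>F. countable F \<and> (\<forall>S\<in>F. nowhere_dense_in X S) \<and> topspace X - A = \<Union>F)"

end

theory Submission
  imports Defs "HOL-Algebra.Group"
begin

locale tfg = comm_group +
  assumes tf: "\<lbrakk>a \<in> carrier G; a \<noteq> \<one>; n \<noteq> (0::int)\<rbrakk> \<Longrightarrow> a [^] n \<noteq> \<one>"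
begin

fun combo :: "'a list \<Rightarrow> (nat \<Rightarrow> int) \<Rightarrow> 'a" where
  "combo [] c = \<one>"
| "combo (h#hs) c = h [^] c 0 \<otimes> combo hs (\<lambda>i. c (Suc i))"

fun dot :: "'a list \<Rightarrow> (nat \<Rightarrow> int) \<Rightarrow> (nat \<Rightarrow> rat) \<Rightarrow> rat" where
  "dot [] c v = 0"
| "dot (h#hs) c v = of_int (c 0) * v 0 + dot hs (\<lambda>i. c (Suc i)) (\<lambda>i. v (Suc i))"

definition consistent :: "'a list \<Rightarrow> (nat \<Rightarrow> rat) \<Rightarrow> bool" where
  "consistent hs v \<longleftrightarrow> (\<forall>a. combo hs a = \<one> \<longrightarrow> dot hs a v = 0)"

lemma combo_closed: "set hs \<subseteq> carrier G \<Longrightarrow> combo hs c \<in> carrier G"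
  by (induction hs arbitrary: c) auto

lemma combo_add: "set hs \<subseteq> carrier G \<Longrightarrow> combo hs (\<lambda>i. c i + d i) = combo hs c \<otimes> combo hs d"
proof (induction hs arbitrary: c d)
  case Nil then show ?case by simp
next
  case (Cons h hs)
  have cl: "h \<in> carrier G" "set hs \<subseteq> carrier G" using Cons.prems by auto
  have "combo (h#hs) (\<lambda>i. c i + d i) = (h [^] c 0 \<otimes> h [^] d 0) \<otimes> (combo hs (\<lambda>i. c (Suc i)) \<otimes> combo hs (\<lambda>i. d (Suc i)))"
    using Cons.IH[OF cl(2)] cl by (simp add: int_pow_mult)
  also have "\<dots> = combo (h#hs) c \<otimes> combo (h#hs) d"
    using cl combo_closed[OF cl(2)] by (simp add: m_ac)
  finally show ?case .
qed

lemma combo_mult: "set hs \<subseteq> carrier G \<Longrightarrow> combo hs (\<lambda>i. m * c i) = combo hs c [^] m"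
proof (induction hs arbitrary: c)
  case Nil then show ?case by simp
next
  case (Cons h hs)
  have cl: "h \<in> carrier G" "set hs \<subseteq> carrier G" using Cons.prems by auto
  show ?case
    using Cons.IH[OF cl(2)] cl combo_closed[OF cl(2)]
    by (simp add: int_pow_distrib int_pow_pow mult.commute)
qed

lemma combo_neg: "set hs \<subseteq> carrier G \<Longrightarrow> combo hs (\<lambda>i. - c i) = inv (combo hs c)"
  using combo_mult[of hs "-1" c] combo_closed[of hs c] by (simp add: int_pow_neg)

lemma combo_zero: "combo hs (\<lambda>i. 0) = \<one>"
  by (induction hs) auto

lemma combo_delta: "set hs \<subseteq> carrier G \<Longrightarrow> i < length hs \<Longrightarrow> combo hs (\<lambda>j. if j = i then 1 else 0) = hs ! i"
proof (induction hs arbitrary: i)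
  case Nil then show ?case by simp
next
  case (Cons h hs)
  show ?case
  proof (cases i)
    case 0 then show ?thesis using Cons.prems by (simp add: combo_zero)
  next
    case (Suc k)
    have "hs ! k \<in> carrier G" using Cons.prems Suc nth_mem[of k hs] by auto
    then show ?thesis using Cons Suc by auto
  qed
qed

lemma dot_add: "dot hs (\<lambda>i. c i + d i) v = dot hs c v + dot hs d v"
  by (induction hs arbitrary: c d v) (auto simp: algebra_simps)

lemma dot_mult: "dot hs (\<lambda>i. m * c i) v = of_int m * dot hs c v"
  by (induction hs arbitrary: c v) (auto simp: algebra_simps)

lemma dot_neg: "dot hs (\<lambda>i. - c i) v = - dot hs c v"
  using dot_mult[of hs "-1" c v] by simp

lemma dot_vadd: "dot hs c (\<lambda>i. v i + t * w i) = dot hs c v + t * dot hs c w"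
  by (induction hs arbitrary: c v w) (auto simp: algebra_simps)

lemma dot_vzero: "dot hs c (\<lambda>i. 0) = 0"
  by (induction hs arbitrary: c) auto

lemma dot_delta: "i < length hs \<Longrightarrow> dot hs (\<lambda>j. if j = i then 1 else 0) v = v i"
proof (induction hs arbitrary: i v)
  case Nil then show ?case by simp
next
  case (Cons h hs)
  have z: "dot hs (\<lambda>j. 0) w = 0" for w
    using dot_mult[of hs 0 "\<lambda>_. 0" w] by simp
  show ?case using Cons by (cases i) (auto simp: z)
qed

lemma consistent_add: "consistent hs v \<Longrightarrow> consistent hs w \<Longrightarrow> consistent hs (\<lambda>i. v i + t * w i)"
  unfolding consistent_def by (simp add: dot_vadd)

lemma separate:
  assumes "set hs \<subseteq> carrier G" "combo hs c \<noteq> \<one>"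
  shows "\<exists>v. consistent hs v \<and> dot hs c v \<noteq> 0"
  using assms
proof (induction hs arbitrary: c)
  case Nil then show ?case by simp
next
  case (Cons h hs)
  have cl: "h \<in> carrier G" "set hs \<subseteq> carrier G" using Cons.prems by auto
  define c' where "c' = (\<lambda>i. c (Suc i))"
  have cc: "combo (h#hs) c = h [^] c 0 \<otimes> combo hs c'" by (simp add: c'_def)
  show ?case
  proof (cases "\<exists>m b. m \<noteq> (0::int) \<and> h [^] m = combo hs b")
    case True
    then obtain m :: int and b where mb: "m \<noteq> 0" "h [^] m = combo hs b" by blast
    define d where "d = (\<lambda>i. c 0 * b i + m * c' i)"
    have "combo hs d = combo hs b [^] c 0 \<otimes> combo hs c' [^] m"
      unfolding d_def using cl by (simp add: combo_add combo_mult)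
    also have "\<dots> = (h [^] c 0 \<otimes> combo hs c') [^] m"
      using cl combo_closed[OF cl(2)] mb(2)[symmetric]
      by (simp add: int_pow_distrib int_pow_pow mult.commute)
    also have "\<dots> \<noteq> \<one>"
      using tf[of "h [^] c 0 \<otimes> combo hs c'" m] Cons.prems(2) cc cl combo_closed[OF cl(2)] mb(1) by auto
    finally have "combo hs d \<noteq> \<one>" .
    then obtain v' where v': "consistent hs v'" "dot hs d v' \<noteq> 0" using Cons.IH[OF cl(2)] by blast
    define v where "v = case_nat (dot hs b v' / of_int m) v'"
    have dd: "dot hs d v' = of_int (c 0) * dot hs b v' + of_int m * dot hs c' v'"
      unfolding d_def by (simp add: dot_add dot_mult)
    have "consistent (h#hs) v"
      unfolding consistent_def
    proof (intro allI impI)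
      fix a assume a: "combo (h#hs) a = \<one>"
      define a' where "a' = (\<lambda>i. a (Suc i))"
      define e where "e = (\<lambda>i. a 0 * b i + m * a' i)"
      have "combo hs e = combo hs b [^] a 0 \<otimes> combo hs a' [^] m"
        unfolding e_def using cl by (simp add: combo_add combo_mult)
      also have "\<dots> = (h [^] a 0 \<otimes> combo hs a') [^] m"
        using cl combo_closed[OF cl(2)] mb(2)[symmetric]
        by (simp add: int_pow_distrib int_pow_pow mult.commute)
      also have "\<dots> = \<one>" using a by (simp add: a'_def)
      finally have "dot hs e v' = 0" using v'(1) unfolding consistent_def by blast
      hence "of_int (a 0) * dot hs b v' + of_int m * dot hs a' v' = 0"
        unfolding e_def by (simp add: dot_add dot_mult)
      then show "dot (h#hs) a v = 0"
        using mb(1) by (simp add: v_def a'_def[symmetric] field_simps)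
    qed
    moreover have "dot (h#hs) c v \<noteq> 0"
    proof
      assume "dot (h#hs) c v = 0"
      hence "of_int (c 0) * (dot hs b v' / of_int m) + dot hs c' v' = 0"
        by (simp add: v_def c'_def)
      hence "dot hs d v' = 0" using mb(1) dd by (simp add: field_simps)
      with v'(2) show False by simp
    qed
    ultimately show ?thesis by blast
  next
    case False
    have rel: "a 0 = 0" if "combo (h#hs) a = \<one>" for a
    proof (rule ccontr)
      assume "a 0 \<noteq> 0"
      have "h [^] a 0 \<otimes> combo hs (\<lambda>i. a (Suc i)) = \<one>" using that by simp
      hence "h [^] a 0 = inv combo hs (\<lambda>i. a (Suc i))"
        using cl combo_closed[OF cl(2)] by (simp add: inv_equality)
      hence "h [^] a 0 = combo hs (\<lambda>i. - a (Suc i))" using cl by (simp add: combo_neg)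
      with False \<open>a 0 \<noteq> 0\<close> show False by blast
    qed
    show ?thesis
    proof (cases "c 0 = 0")
      case False
      define v where "v = (case_nat 1 (\<lambda>_. 0) :: nat \<Rightarrow> rat)"
      have "consistent (h#hs) v"
        unfolding consistent_def using rel by (simp add: v_def dot_vzero)
      moreover have "dot (h#hs) c v \<noteq> 0" using False by (simp add: v_def dot_vzero)
      ultimately show ?thesis by blast
    next
      case True
      hence "combo hs c' \<noteq> \<one>" using cc Cons.prems(2) cl combo_closed[OF cl(2)] by simp
      then obtain v' where v': "consistent hs v'" "dot hs c' v' \<noteq> 0" using Cons.IH[OF cl(2)] by blast
      define v where "v = case_nat 0 v'"
      have "consistent (h#hs) v"
        unfolding consistent_def
      proof (intro allI impI)
        fix a assume a: "combo (h#hs) a = \<one>"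
        have "a 0 = 0" using rel[OF a] .
        hence "combo hs (\<lambda>i. a (Suc i)) = \<one>" using a cl combo_closed[OF cl(2)] by simp
        then show "dot (h#hs) a v = 0" using v'(1) unfolding consistent_def by (simp add: v_def)
      qed
      moreover have "dot (h#hs) c v \<noteq> 0" using v'(2) True by (simp add: v_def c'_def)
      ultimately show ?thesis by blast
    qed
  qed
qed

lemma separate_many:
  assumes "set hs \<subseteq> carrier G" "finite C" "\<forall>c\<in>C. combo hs c \<noteq> \<one>"
  shows "\<exists>v. consistent hs v \<and> (\<forall>c\<in>C. dot hs c v \<noteq> 0)"
  using assms(2,3)
proof (induction C rule: finite_induct)
  case empty
  have "consistent hs (\<lambda>_. 0)" by (simp add: consistent_def dot_vzero)
  then show ?case by blast
next
  case (insert c0 C)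
  then obtain v where v: "consistent hs v" "\<forall>c\<in>C. dot hs c v \<noteq> 0" by auto
  obtain w where w: "consistent hs w" "dot hs c0 w \<noteq> 0" using separate[OF assms(1)] insert.prems by auto
  define bad where "bad = (\<lambda>c. {t. dot hs c v + t * dot hs c w = 0})"
  have fin: "finite (bad c)" if "c \<in> insert c0 C" for c
  proof (cases "dot hs c w = 0")
    case True
    then show ?thesis using that v(2) w(2) by (auto simp: bad_def)
  next
    case False
    have "bad c \<subseteq> {- dot hs c v / dot hs c w}" using False by (auto simp: bad_def field_simps)
    then show ?thesis using finite_subset by blast
  qed
  have "finite (\<Union>c\<in>insert c0 C. bad c)" using fin insert.hyps(1) by blast
  hence "\<exists>t::rat. t \<notin> (\<Union>c\<in>insert c0 C. bad c)"
    using infinite_UNIV_char_0 by (metis UNIV_I finite_subset subsetI)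
  then obtain t where t: "t \<notin> (\<Union>c\<in>insert c0 C. bad c)" by blast
  have "consistent hs (\<lambda>i. v i + t * w i)" using consistent_add[OF v(1) w(1)] .
  moreover have "\<forall>c\<in>insert c0 C. dot hs c (\<lambda>i. v i + t * w i) \<noteq> 0"
    using t by (auto simp: dot_vadd bad_def)
  ultimately show ?case by blast
qed

lemma pow_eq_cancel:
  assumes "e \<in> carrier G" "e \<noteq> \<one>" "e [^] (k::int) = e [^] (l::int)"
  shows "k = l"
proof (rule ccontr)
  assume "k \<noteq> l"
  hence "k - l \<noteq> 0" by simp
  have "e [^] (k - l) = e [^] k \<otimes> inv (e [^] l)" using assms(1) by (simp add: int_pow_diff)
  also have "\<dots> = \<one>" using assms by simp
  finally show False using tf[OF assms(1,2) \<open>k - l \<noteq> 0\<close>] by simp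
qed

lemma rep_unique:
  assumes e: "e \<in> carrier G" "e \<noteq> \<one>" and x: "x \<in> carrier G"
    and r1: "x [^] (n::int) = e [^] (k::int)" and r2: "x [^] (n'::int) = e [^] (k'::int)"
  shows "k * n' = k' * n"
proof -
  have "e [^] (k * n') = x [^] (n * n')" using r1 x e by (metis int_pow_pow)
  also have "\<dots> = x [^] (n' * n)" by (simp add: mult.commute)
  also have "\<dots> = e [^] (k' * n)" using r2 x e by (metis int_pow_pow)
  finally show ?thesis using pow_eq_cancel[OF e] by blast
qed

lemma iso_Q:
  assumes e: "e \<in> carrier G" "e \<noteq> \<one>"
    and dv: "\<And>n::nat. n > 0 \<Longrightarrow> \<exists>y\<in>carrier G. y [^] n = e"
    and dep: "\<And>x. x \<in> carrier G \<Longrightarrow> \<exists>n::nat. n > 0 \<and> (\<exists>k::int. x [^] int n = e [^] k)"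
  shows "\<exists>f. bij_betw f (carrier G) (UNIV::rat set) \<and> (\<forall>x\<in>carrier G. \<forall>y\<in>carrier G. f (x \<otimes> y) = f x + f y)"
proof -
  define R where "R = (\<lambda>x (q::rat). \<exists>n::nat. \<exists>k::int. n > 0 \<and> x [^] int n = e [^] k \<and> q = of_int k / of_nat n)"
  define f where "f = (\<lambda>x. SOME q. R x q)"
  have Rf: "R x (f x)" if xc: "x \<in> carrier G" for x
  proof -
    obtain n and k :: int where "n > 0" "x [^] int n = e [^] k" using dep[OF xc] by blast
    hence "R x (of_int k / of_nat n)" unfolding R_def by blast
    thus ?thesis unfolding f_def by (rule someI)
  qed
  have fval: "f x = of_int k / of_nat n" if xc1: "x \<in> carrier G" and "n > 0" "x [^] int n = e [^] k" for x n k
  proof -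
    obtain n' and k' :: int where nk: "n' > 0" "x [^] int n' = e [^] k'" "f x = of_int k' / of_nat n'"
      using Rf[OF xc1] unfolding R_def by blast
    have "k * int n' = k' * int n" using rep_unique[OF e that(1) that(3) nk(2)] .
    hence "(of_int (k * int n') :: rat) = of_int (k' * int n)" by (simp only: of_int_eq_iff)
    hence "(of_int k :: rat) * of_nat n' = of_int k' * of_nat n" by simp
    moreover have "(of_nat n :: rat) \<noteq> 0" "(of_nat n' :: rat) \<noteq> 0" using that(2) nk(1) by auto
    ultimately have "(of_int k :: rat) / of_nat n = of_int k' / of_nat n'" by (simp add: divide_eq_eq eq_divide_eq)
    thus ?thesis using nk(3) by simp
  qed
  have pp: "z [^] (int n * m) = e [^] (k * m)" if "z \<in> carrier G" "z [^] int n = e [^] k" for z n k m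
  proof -
    have "z [^] (int n * m) = (z [^] int n) [^] m" using int_pow_pow[OF that(1)] by simp
    also have "\<dots> = (e [^] k) [^] m" using that(2) by simp
    also have "\<dots> = e [^] (k * m)" using int_pow_pow[OF e(1)] by simp
    finally show ?thesis .
  qed
  have hom: "f (x \<otimes> y) = f x + f y" if xyc: "x \<in> carrier G" "y \<in> carrier G" for x y
  proof -
    obtain n and k :: int where nk: "n > 0" "x [^] int n = e [^] k" using dep[OF xyc(1)] by blast
    obtain n' and k' :: int where nk': "n' > 0" "y [^] int n' = e [^] k'" using dep[OF xyc(2)] by blast
    have "(x \<otimes> y) [^] int (n * n') = x [^] (int n * int n') \<otimes> y [^] (int n' * int n)"
      using xyc by (simp add: int_pow_distrib mult.commute)
    also have "\<dots> = e [^] (k * int n') \<otimes> e [^] (k' * int n)"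
      using pp[OF xyc(1) nk(2), of "int n'"] pp[OF xyc(2) nk'(2), of "int n"] by simp
    also have "\<dots> = e [^] (k * int n' + k' * int n)" using e by (simp add: int_pow_mult)
    finally have eq: "(x \<otimes> y) [^] int (n * n') = e [^] (k * int n' + k' * int n)" .
    have "f (x \<otimes> y) = of_int (k * int n' + k' * int n) / of_nat (n * n')"
      using fval[OF _ _ eq] xyc nk(1) nk'(1) by simp
    also have "\<dots> = of_int k / of_nat n + of_int k' / of_nat n'"
      using nk(1) nk'(1) by (simp add: field_simps)
    also have "\<dots> = f x + f y" using fval[OF xyc(1) nk(1) nk(2)] fval[OF xyc(2) nk'(1) nk'(2)] by simp
    finally show ?thesis .
  qed
  have inj: "inj_on f (carrier G)"
  proof (rule inj_onI)
    fix x y assume xy: "x \<in> carrier G" "y \<in> carrier G" "f x = f y"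
    obtain n and k :: int where nk: "n > 0" "x [^] int n = e [^] k" using dep[OF xy(1)] by blast
    obtain n' and k' :: int where nk': "n' > 0" "y [^] int n' = e [^] k'" using dep[OF xy(2)] by blast
    have "(of_int k :: rat) / of_nat n = of_int k' / of_nat n'"
      using fval[OF xy(1) nk(1) nk(2)] fval[OF xy(2) nk'(1) nk'(2)] xy(3) by simp
    hence "(of_int (k * int n') :: rat) = of_int (k' * int n)" using nk(1) nk'(1) by (simp add: field_simps)
    hence eq: "k * int n' = k' * int n" by (simp only: of_int_eq_iff)
    have "x [^] (int n * int n') = e [^] (k * int n')" using pp[OF xy(1) nk(2)] .
    also have "\<dots> = e [^] (k' * int n)" using eq by simp
    also have "\<dots> = y [^] (int n' * int n)" using pp[OF xy(2) nk'(2)] by simp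
    finally have xe: "x [^] (int n * int n') = y [^] (int n * int n')" by (simp add: mult.commute)
    have "(x \<otimes> inv y) [^] (int n * int n') = x [^] (int n * int n') \<otimes> inv (y [^] (int n * int n'))"
      using xy by (simp add: int_pow_distrib int_pow_inv)
    also have "\<dots> = \<one>" using xe xy by simp
    finally have "(x \<otimes> inv y) [^] (int n * int n') = \<one>" .
    moreover have "int n * int n' \<noteq> 0" using nk(1) nk'(1) by simp
    ultimately have xi: "x \<otimes> inv y = \<one>" using tf[of "x \<otimes> inv y" "int n * int n'"] xy by blast
    have "x = x \<otimes> (inv y \<otimes> y)" using xy by simp
    also have "\<dots> = (x \<otimes> inv y) \<otimes> y" using xy by (simp add: m_assoc)
    also have "\<dots> = y" using xi xy by simp
    finally show "x = y" .
  qed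
  have surj: "f ` carrier G = UNIV"
  proof -
    have "q \<in> f ` carrier G" for q :: rat
    proof -
    obtain a b where ab: "quotient_of q = (a, b)" by (cases "quotient_of q")
    have b: "b > 0" and q: "q = of_int a / of_int b" using ab quotient_of_denom_pos quotient_of_div by blast+
    obtain y where y: "y \<in> carrier G" "y [^] nat b = e" using dv[of "nat b"] b by auto
    have nb: "int (nat b) = b" using b by simp
    have yb: "y [^] b = e" using int_pow_int[of G y "nat b"] y(2) nb by simp
    have "(y [^] a) [^] b = (y [^] b) [^] a"
      using int_pow_pow[OF y(1)] by (simp add: mult.commute)
    also have "\<dots> = e [^] a" using yb by simp
    finally have ya: "(y [^] a) [^] int (nat b) = e [^] a" using nb by simp
    have yc: "y [^] a \<in> carrier G" using y(1) by simp
    have "f (y [^] a) = of_int a / of_nat (nat b)" using fval[OF yc _ ya] b by simp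
    also have "\<dots> = q" using q b by simp
    finally show "q \<in> f ` carrier G" using yc by (metis image_eqI)
    qed
    thus ?thesis by auto
  qed
  show ?thesis using inj surj hom unfolding bij_betw_def by blast
qed

end

lemma (in group) mult_inv_one_eq:
  assumes "a \<in> carrier G" "b \<in> carrier G" "a \<otimes> inv b = \<one>" shows "a = b"
proof -
  have "a = a \<otimes> (inv b \<otimes> b)" using assms by simp
  also have "\<dots> = (a \<otimes> inv b) \<otimes> b" using assms(1,2) by (simp add: m_assoc)
  also have "\<dots> = \<one> \<otimes> b" unfolding assms(3) ..
  also have "\<dots> = b" using assms(2) by (rule l_one)
  finally show ?thesis .
qed

definition Gr :: "(nat \<times> nat \<Rightarrow> nat) \<Rightarrow> nat monoid" where
  "Gr G = \<lparr>carrier = UNIV, mult = (\<lambda>a b. G (a, b)), one = 0\<rparr>"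

lemma Gr_simps: "carrier (Gr G) = UNIV" "a \<otimes>\<^bsub>Gr G\<^esub> b = G (a, b)" "\<one>\<^bsub>Gr G\<^esub> = 0"
  by (simp_all add: Gr_def)

lemma Gr_comm_group:
  assumes "is_abgroup_op G" shows "comm_group (Gr G)"
proof (rule comm_groupI)
  fix x assume "x \<in> carrier (Gr G)"
  obtain b where "G (x, b) = 0" using assms unfolding is_abgroup_op_def by blast
  hence "G (b, x) = 0" using assms unfolding is_abgroup_op_def by metis
  thus "\<exists>y\<in>carrier (Gr G). y \<otimes>\<^bsub>Gr G\<^esub> x = \<one>\<^bsub>Gr G\<^esub>" by (auto simp: Gr_simps)
qed (use assms in \<open>auto simp: Gr_simps is_abgroup_op_def\<close>)

lemma gmult_pow:
  assumes "is_abgroup_op G" shows "gmult G n a = a [^]\<^bsub>Gr G\<^esub> n"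
proof (induction n)
  case 0 then show ?case by (simp add: Gr_simps)
next
  case (Suc n)
  have "gmult G (Suc n) a = G (gmult G n a, a)"
    using assms unfolding is_abgroup_op_def by simp
  then show ?case using Suc by (simp add: Gr_simps)
qed

lemma Gr_tfg:
  assumes "G \<in> TFAb" shows "tfg (Gr G)"
proof -
  have ab: "is_abgroup_op G" and tfo: "torsion_free_op G" using assms by (auto simp: TFAb_def)
  interpret comm_group "Gr G" using Gr_comm_group[OF ab] .
  show ?thesis
  proof (unfold_locales)
    fix a and n :: int
    assume a: "a \<in> carrier (Gr G)" "a \<noteq> \<one>\<^bsub>Gr G\<^esub>" "n \<noteq> 0"
    have a0: "a \<noteq> 0" using a by (simp add: Gr_simps)
    have pos: "a [^]\<^bsub>Gr G\<^esub> int m \<noteq> \<one>\<^bsub>Gr G\<^esub>" if "m > 0" for m :: nat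
    proof -
      have "gmult G m a \<noteq> 0" using tfo a0 that unfolding torsion_free_op_def by blast
      thus ?thesis using gmult_pow[OF ab, of m a] by (simp add: int_pow_int Gr_simps)
    qed
    show "a [^]\<^bsub>Gr G\<^esub> n \<noteq> \<one>\<^bsub>Gr G\<^esub>"
    proof (cases "n > 0")
      case True
      then show ?thesis using pos[of "nat n"] by simp
    next
      case False
      hence "n = - int (nat (-n))" "nat (-n) > 0" using a(3) by auto
      hence "a [^]\<^bsub>Gr G\<^esub> n = inv\<^bsub>Gr G\<^esub> (a [^]\<^bsub>Gr G\<^esub> int (nat (-n)))"
        using a(1) by (metis int_pow_neg)
      then show ?thesis using pos[of "nat (-n)"] \<open>nat (-n) > 0\<close> a(1)
        by (metis int_pow_closed inv_eq_1_iff)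
    qed
  qed
qed

definition agree :: "(nat \<times> nat) set \<Rightarrow> (nat \<times> nat \<Rightarrow> nat) \<Rightarrow> (nat \<times> nat \<Rightarrow> nat) set" where
  "agree K G = {H. \<forall>p\<in>K. H p = G p}"

lemma open_agree: "finite K \<Longrightarrow> open (agree K G)"
proof -
  assume "finite K"
  have "open {f. \<forall>i\<in>K. f (id i) \<in> {G i}}"
    by (rule product_topology_basis') (use \<open>finite K\<close> in \<open>auto intro: open_discrete\<close>)
  moreover have "{f. \<forall>i\<in>K. f (id i) \<in> {G i}} = agree K G" by (auto simp: agree_def)
  ultimately show ?thesis by simp
qed

lemma basic_nbhd:
  assumes "open U" "G \<in> U"
  shows "\<exists>K. finite K \<and> agree K G \<subseteq> U"
proof -
  have "openin (product_topology (\<lambda>i. euclidean) UNIV) U" using assms(1) by (simp add: open_fun_def)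
  from product_topology_open_contains_basis[OF this assms(2)]
  obtain X where X: "G \<in> (\<Pi>\<^sub>E i\<in>UNIV. X i)" "finite {i. X i \<noteq> topspace euclidean}"
      "(\<Pi>\<^sub>E i\<in>UNIV. X i) \<subseteq> U" by blast
  define K where "K = {i. X i \<noteq> UNIV}"
  have "finite K" using X(2) by (simp add: K_def)
  moreover have "agree K G \<subseteq> U"
  proof
    fix H assume "H \<in> agree K G"
    have "H i \<in> X i" for i
    proof (cases "i \<in> K")
      case True
      have "G i \<in> X i" using X(1) PiE_mem by blast
      then show ?thesis using True \<open>H \<in> agree K G\<close> by (auto simp: agree_def)
    next
      case False
      then show ?thesis by (simp add: K_def)
    qed
    hence "H \<in> (\<Pi>\<^sub>E i\<in>UNIV. X i)" by (simp add: PiE_iff)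
    thus "H \<in> U" using X(3) by blast
  qed
  ultimately show ?thesis by blast
qed

lemma gm_agree:
  "(\<forall>k<n. H (b, gmult H0 k b) = H0 (b, gmult H0 k b)) \<Longrightarrow> gmult H n b = gmult H0 n b"
  by (induction n) auto

definition Ob :: "nat \<Rightarrow> (nat \<times> nat \<Rightarrow> nat) set" where
  "Ob n = {G. \<exists>b. gmult G n b = 1}"

definition Pb :: "nat \<Rightarrow> (nat \<times> nat \<Rightarrow> nat) set" where
  "Pb x = {G. \<exists>n>0. \<exists>m. gmult G n x = gmult G m 1 \<or> G (gmult G n x, gmult G m 1) = 0}"

lemma open_Ob: "open (Ob n)"
proof (subst open_subopen, intro ballI)
  fix H0 assume "H0 \<in> Ob n"
  then obtain b where b: "gmult H0 n b = 1" by (auto simp: Ob_def)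
  define K where "K = (\<lambda>k. (b, gmult H0 k b)) ` {..<n}"
  have "finite K" by (simp add: K_def)
  moreover have "agree K H0 \<subseteq> Ob n"
  proof
    fix H assume "H \<in> agree K H0"
    hence "gmult H n b = gmult H0 n b" by (intro gm_agree) (auto simp: agree_def K_def)
    thus "H \<in> Ob n" using b by (auto simp: Ob_def)
  qed
  moreover have "H0 \<in> agree K H0" by (simp add: agree_def)
  ultimately show "\<exists>T. open T \<and> H0 \<in> T \<and> T \<subseteq> Ob n" using open_agree by blast
qed

lemma open_Pb: "open (Pb x)"
proof (subst open_subopen, intro ballI)
  fix H0 assume "H0 \<in> Pb x"
  then obtain n m where nm: "n > 0" "gmult H0 n x = gmult H0 m 1 \<or> H0 (gmult H0 n x, gmult H0 m 1) = 0"
    by (auto simp: Pb_def)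
  define K where "K = (\<lambda>k. (x, gmult H0 k x)) ` {..<n} \<union> (\<lambda>k. (1, gmult H0 k 1)) ` {..<m}
      \<union> {(gmult H0 n x, gmult H0 m 1)}"
  have "finite K" by (simp add: K_def)
  moreover have "agree K H0 \<subseteq> Pb x"
  proof
    fix H assume H: "H \<in> agree K H0"
    hence e1: "gmult H n x = gmult H0 n x" by (intro gm_agree) (auto simp: agree_def K_def)
    have e2: "gmult H m 1 = gmult H0 m 1" using H by (intro gm_agree) (auto simp: agree_def K_def)
    have e3: "H (gmult H0 n x, gmult H0 m 1) = H0 (gmult H0 n x, gmult H0 m 1)"
      using H by (auto simp: agree_def K_def)
    have "gmult H n x = gmult H m 1 \<or> H (gmult H n x, gmult H m 1) = 0"
      using nm(2) unfolding e1 e2 e3 .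
    then show "H \<in> Pb x" using nm(1) unfolding Pb_def by blast
  qed
  moreover have "H0 \<in> agree K H0" by (simp add: agree_def)
  ultimately show "\<exists>T. open T \<and> H0 \<in> T \<and> T \<subseteq> Pb x" using open_agree by blast
qed

definition Iso :: "(nat \<times> nat \<Rightarrow> nat) set" where
  "Iso = {G \<in> TFAb. \<exists>f :: nat \<Rightarrow> rat. bij f \<and> (\<forall>a b. f (G (a, b)) = f a + f b)}"

lemma iso_gmult:
  assumes "is_abgroup_op G" "\<forall>a b. f (G (a, b)) = f a + (f b :: rat)"
  shows "f 0 = 0" "f (gmult G n a) = of_nat n * f a"
proof -
  have "f 0 = f (G (0, 0))" using assms(1) by (simp add: is_abgroup_op_def)
  also have "\<dots> = f 0 + f 0" using assms(2) by simp
  finally show f0: "f 0 = 0" by simp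
  show "f (gmult G n a) = of_nat n * f a"
    by (induction n) (use assms(2) f0 in \<open>auto simp: algebra_simps\<close>)
qed

lemma Iso_sub:
  assumes "G \<in> Iso" shows "n > 0 \<Longrightarrow> G \<in> Ob n" "G \<in> Pb x"
proof -
  obtain f :: "nat \<Rightarrow> rat" where f: "bij f" "\<forall>a b. f (G (a, b)) = f a + f b"
    using assms by (auto simp: Iso_def)
  have ab: "is_abgroup_op G" using assms by (auto simp: Iso_def TFAb_def)
  note fg = iso_gmult[OF ab f(2)]
  have injf: "inj f" using f(1) bij_is_inj by blast
  have f1: "f 1 \<noteq> 0" using injf fg(1) by (metis inj_eq zero_neq_one)
  {
    assume n: "n > 0"
    define b where "b = inv_into UNIV f (f 1 / of_nat n)"
    have "f b = f 1 / of_nat n" unfolding b_def using f(1) by (simp add: bij_is_surj surj_f_inv_f)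
    hence "f (gmult G n b) = f 1" using fg(2)[of n b] n by simp
    hence "gmult G n b = 1" using injf by (simp add: inj_eq)
    thus "G \<in> Ob n" by (auto simp: Ob_def)
  }
  obtain p s where ps: "quotient_of (f x / f 1) = (p, s)" by (cases "quotient_of (f x / f 1)")
  have s: "s > 0" and q: "f x / f 1 = of_int p / of_int s" using ps quotient_of_denom_pos quotient_of_div by blast+
  have fx: "of_int s * f x = of_int p * f 1" using q s f1 by (simp add: field_simps)
  define nn where "nn = nat s"
  have nn: "nn > 0" "of_nat nn * f x = of_int p * f 1" using s fx by (auto simp: nn_def)
  show "G \<in> Pb x"
  proof (cases "p \<ge> 0")
    case True
    have "f (gmult G nn x) = f (gmult G (nat p) 1)" using fg(2) nn(2) True by simp
    hence "gmult G nn x = gmult G (nat p) 1" using injf by (simp add: inj_eq)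
    thus ?thesis using nn(1) by (auto simp: Pb_def)
  next
    case False
    have "f (G (gmult G nn x, gmult G (nat (-p)) 1)) = f 0"
      using fg nn(2) False f(2) by (simp add: algebra_simps)
    hence "G (gmult G nn x, gmult G (nat (-p)) 1) = 0" using injf by (simp add: inj_eq)
    thus ?thesis using nn(1) by (auto simp: Pb_def)
  qed
qed

lemma alg_main:
  assumes G: "G \<in> TFAb" and O: "\<And>n. n > 0 \<Longrightarrow> G \<in> Ob n" and P: "\<And>x. G \<in> Pb x"
  shows "G \<in> Iso"
proof -
  have ab: "is_abgroup_op G" using G by (simp add: TFAb_def)
  interpret tfg "Gr G" using Gr_tfg[OF G] .
  have e: "(1::nat) \<in> carrier (Gr G)" "(1::nat) \<noteq> \<one>\<^bsub>Gr G\<^esub>" by (simp_all add: Gr_simps)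
  have dv: "\<exists>y\<in>carrier (Gr G). y [^]\<^bsub>Gr G\<^esub> n = (1::nat)" if "n > 0" for n :: nat
    using O[OF that] gmult_pow[OF ab] by (auto simp: Ob_def Gr_simps)
  have dep: "\<exists>n::nat. n > 0 \<and> (\<exists>k::int. x [^]\<^bsub>Gr G\<^esub> int n = (1::nat) [^]\<^bsub>Gr G\<^esub> k)"
    if "x \<in> carrier (Gr G)" for x
  proof -
    obtain n m where nm: "n > 0" "gmult G n x = gmult G m 1 \<or> G (gmult G n x, gmult G m 1) = 0"
      using P[of x] by (auto simp: Pb_def)
    show ?thesis
    proof (cases "gmult G n x = gmult G m 1")
      case True
      hence "x [^]\<^bsub>Gr G\<^esub> int n = (1::nat) [^]\<^bsub>Gr G\<^esub> int m"
        by (simp add: int_pow_int gmult_pow[OF ab])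
      thus ?thesis using nm(1) by blast
    next
      case False
      hence "x [^]\<^bsub>Gr G\<^esub> n \<otimes>\<^bsub>Gr G\<^esub> (1::nat) [^]\<^bsub>Gr G\<^esub> m = \<one>\<^bsub>Gr G\<^esub>"
        using nm(2) by (simp add: gmult_pow[OF ab] Gr_simps)
      hence "x [^]\<^bsub>Gr G\<^esub> n = inv\<^bsub>Gr G\<^esub> ((1::nat) [^]\<^bsub>Gr G\<^esub> m)"
        using e(1) that by (simp add: inv_equality[symmetric] m_comm)
      hence "x [^]\<^bsub>Gr G\<^esub> int n = (1::nat) [^]\<^bsub>Gr G\<^esub> (- int m)"
        using e(1) by (simp add: int_pow_int int_pow_neg_int)
      thus ?thesis using nm(1) by blast
    qed
  qed
  obtain f where f: "bij_betw f (carrier (Gr G)) (UNIV::rat set)"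
      "\<forall>x\<in>carrier (Gr G). \<forall>y\<in>carrier (Gr G). f (x \<otimes>\<^bsub>Gr G\<^esub> y) = f x + f y"
    using iso_Q[OF e dv dep] by blast
  have "bij f" using f(1) by (simp add: Gr_simps)
  moreover have "\<forall>a b. f (G (a, b)) = f a + f b" using f(2) by (simp add: Gr_simps)
  ultimately show ?thesis using G by (auto simp: Iso_def)
qed

lemma extend_bij:
  fixes g :: "nat \<Rightarrow> rat"
  assumes "finite S" "inj_on g S"
  shows "\<exists>\<phi>. bij \<phi> \<and> (\<forall>x\<in>S. \<phi> x = g x)"
proof -
  define A where "A = UNIV - S"
  define B where "B = UNIV - g ` S"
  have iA: "infinite A" using assms(1) by (simp add: A_def Diff_infinite_finite)
  have iB: "infinite B" using assms(1) infinite_UNIV_char_0[where 'a=rat] by (simp add: B_def Diff_infinite_finite)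
  have cA: "countable A" and cB: "countable B" by auto
  have hA: "bij_betw (from_nat_into A) UNIV A" using bij_betw_from_nat_into[OF cA iA] .
  have hB: "bij_betw (from_nat_into B) UNIV B" using bij_betw_from_nat_into[OF cB iB] .
  define h where "h = from_nat_into B \<circ> inv_into UNIV (from_nat_into A)"
  have hb: "bij_betw h A B" unfolding h_def
    by (rule bij_betw_trans[OF bij_betw_inv_into[OF hA] hB])
  define \<phi> where "\<phi> = (\<lambda>x. if x \<in> S then g x else h x)"
  have b1: "bij_betw \<phi> S (g ` S)"
    using inj_on_imp_bij_betw[OF assms(2)] by (rule bij_betw_cong[THEN iffD1, rotated]) (simp add: \<phi>_def)
  have b2: "bij_betw \<phi> A B"
    using hb by (rule bij_betw_cong[THEN iffD1, rotated]) (simp add: \<phi>_def A_def)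
  have "bij_betw \<phi> (S \<union> A) (g ` S \<union> B)" by (rule bij_betw_combine[OF b1 b2]) (auto simp: B_def)
  moreover have "S \<union> A = UNIV" "g ` S \<union> B = UNIV" by (auto simp: A_def B_def)
  ultimately have "bij \<phi>" by simp
  thus ?thesis by (auto simp: \<phi>_def)
qed


lemma density:
  assumes G: "G \<in> TFAb" and K: "finite K"
  shows "\<exists>G'\<in>Iso. \<forall>p\<in>K. G' p = G p"
proof -
  have ab: "is_abgroup_op G" using G by (simp add: TFAb_def)
  interpret tfg "Gr G" using Gr_tfg[OF G] .
  define S where "S = insert 0 (fst ` K \<union> snd ` K \<union> G ` K)"
  have finS: "finite S" using K by (simp add: S_def)
  define hs where "hs = sorted_list_of_set S"
  have hs: "set hs = S" "distinct hs" using finS by (simp_all add: hs_def)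
  have hsc: "set hs \<subseteq> carrier (Gr G)" by (simp add: Gr_simps)
  define n where "n = length hs"
  define \<delta> where "\<delta> = (\<lambda>(i::nat) (j::nat). if j = i then 1 else (0::int))"
  have cdelta: "combo hs (\<delta> i) = hs ! i" if "i < n" for i
    using combo_delta[OF hsc, of i] that by (simp add: \<delta>_def n_def)
  have ddelta: "dot hs (\<delta> i) v = v i" if "i < n" for i v
    using dot_delta[of i hs v] that by (simp add: \<delta>_def n_def)
  define C where "C = (\<lambda>(i,j). \<lambda>k. \<delta> i k + - \<delta> j k) ` {(i,j). i < n \<and> j < n \<and> i \<noteq> j}"
  have finC: "finite C"
  proof -
    have "{(i,j). i < n \<and> j < n \<and> i \<noteq> j} \<subseteq> {..<n} \<times> {..<n}" by auto
    hence "finite {(i,j). i < n \<and> j < n \<and> i \<noteq> j}" using finite_subset by blast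
    thus ?thesis by (simp add: C_def)
  qed
  have comb2: "combo hs (\<lambda>k. \<delta> i k + - \<delta> j k) = hs ! i \<otimes>\<^bsub>Gr G\<^esub> inv\<^bsub>Gr G\<^esub> (hs ! j)"
    if "i < n" "j < n" for i j
  proof -
    have "combo hs (\<lambda>k. \<delta> i k + - \<delta> j k) = combo hs (\<delta> i) \<otimes>\<^bsub>Gr G\<^esub> combo hs (\<lambda>k. - \<delta> j k)"
      using combo_add[OF hsc, of "\<delta> i" "\<lambda>k. - \<delta> j k"] by simp
    also have "\<dots> = hs ! i \<otimes>\<^bsub>Gr G\<^esub> inv\<^bsub>Gr G\<^esub> (hs ! j)"
      using combo_neg[OF hsc, of "\<delta> j"] cdelta that by simp
    finally show ?thesis .
  qed
  have dot2: "dot hs (\<lambda>k. \<delta> i k + - \<delta> j k) v = v i - v j" if "i < n" "j < n" for i j v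
    using that dot_add[of hs "\<delta> i" "\<lambda>k. - \<delta> j k" v] dot_neg[of hs "\<delta> j" v] ddelta by simp
  have Cne: "\<forall>c\<in>C. combo hs c \<noteq> \<one>\<^bsub>Gr G\<^esub>"
  proof
    fix c assume "c \<in> C"
    then obtain i j where ij: "i < n" "j < n" "i \<noteq> j" "c = (\<lambda>k. \<delta> i k + - \<delta> j k)"
      by (auto simp: C_def)
    have ne: "hs ! i \<noteq> hs ! j" using ij hs(2) by (simp add: n_def nth_eq_iff_index_eq)
    show "combo hs c \<noteq> \<one>\<^bsub>Gr G\<^esub>"
    proof
      assume "combo hs c = \<one>\<^bsub>Gr G\<^esub>"
      hence "hs ! i \<otimes>\<^bsub>Gr G\<^esub> inv\<^bsub>Gr G\<^esub> (hs ! j) = \<one>\<^bsub>Gr G\<^esub>" using comb2 ij by simp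
      hence "hs ! i = hs ! j" by (rule mult_inv_one_eq[rotated 2]) (simp_all add: Gr_simps)
      with ne show False by simp
    qed
  qed
  obtain v where v: "consistent hs v" "\<forall>c\<in>C. dot hs c v \<noteq> 0"
    using separate_many[OF hsc finC Cne] by blast
  define idx where "idx = (\<lambda>x. SOME i. i < n \<and> hs ! i = x)"
  have idx: "idx x < n \<and> hs ! idx x = x" if "x \<in> S" for x
  proof -
    have "\<exists>i. i < n \<and> hs ! i = x" using that hs(1) by (simp add: n_def in_set_conv_nth[symmetric])
    thus ?thesis unfolding idx_def by (rule someI_ex)
  qed
  define g where "g = (\<lambda>x. v (idx x))"
  have injg: "inj_on g S"
  proof (rule inj_onI, rule ccontr)
    fix x y assume xy: "x \<in> S" "y \<in> S" "g x = g y" "x \<noteq> y"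
    have ix: "idx x < n" "hs ! idx x = x" using idx[OF xy(1)] by auto
    have iy: "idx y < n" "hs ! idx y = y" using idx[OF xy(2)] by auto
    have ij: "idx x < n" "idx y < n" "idx x \<noteq> idx y" using ix iy xy(4) by auto
    have "(idx x, idx y) \<in> {(i,j). i < n \<and> j < n \<and> i \<noteq> j}" using ij by simp
    hence "(\<lambda>k. \<delta> (idx x) k + - \<delta> (idx y) k) \<in> C" unfolding C_def by (rule rev_image_eqI) simp
    hence "dot hs (\<lambda>k. \<delta> (idx x) k + - \<delta> (idx y) k) v \<noteq> 0" using v(2) by blast
    thus False using dot2 ij xy(3) by (simp add: g_def)
  qed
  have g0: "g 0 = 0"
  proof -
    have i0: "idx 0 < n" "hs ! idx 0 = 0" using idx[of 0] by (auto simp: S_def)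
    have "combo hs (\<delta> (idx 0)) = \<one>\<^bsub>Gr G\<^esub>" using cdelta i0 by (simp add: Gr_simps)
    hence "dot hs (\<delta> (idx 0)) v = 0" using v(1) by (simp add: consistent_def)
    thus ?thesis using ddelta i0 by (simp add: g_def)
  qed
  have ghom: "g (G (x, y)) = g x + g y" if "(x, y) \<in> K" for x y
  proof -
    have "x \<in> fst ` K" "y \<in> snd ` K" "G (x, y) \<in> G ` K" using that by (auto intro: rev_image_eqI)
    hence inS: "x \<in> S" "y \<in> S" "G (x, y) \<in> S" by (simp_all add: S_def)
    define i where "i = idx x"
    define j where "j = idx y"
    define l where "l = idx (G (x, y))"
    have ijl: "i < n" "j < n" "l < n" "hs ! i = x" "hs ! j = y" "hs ! l = G (x, y)"
      using idx inS by (auto simp: i_def j_def l_def)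
    define c where "c = (\<lambda>k. \<delta> l k + - \<delta> i k + - \<delta> j k)"
    have "combo hs c = combo hs (\<lambda>k. \<delta> l k + - \<delta> i k) \<otimes>\<^bsub>Gr G\<^esub> combo hs (\<lambda>k. - \<delta> j k)"
      unfolding c_def using combo_add[OF hsc, of "\<lambda>k. \<delta> l k + - \<delta> i k" "\<lambda>k. - \<delta> j k"] by simp
    also have "\<dots> = G (x, y) \<otimes>\<^bsub>Gr G\<^esub> inv\<^bsub>Gr G\<^esub> x \<otimes>\<^bsub>Gr G\<^esub> inv\<^bsub>Gr G\<^esub> y"
      using comb2[of l i] combo_neg[OF hsc, of "\<delta> j"] cdelta ijl by simp
    also have "\<dots> = \<one>\<^bsub>Gr G\<^esub>"
    proof -
      have xc: "x \<in> carrier (Gr G)" "y \<in> carrier (Gr G)" by (simp_all add: Gr_simps)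
      have "G (x, y) = x \<otimes>\<^bsub>Gr G\<^esub> y" by (simp add: Gr_simps)
      have "x \<otimes>\<^bsub>Gr G\<^esub> y \<otimes>\<^bsub>Gr G\<^esub> inv\<^bsub>Gr G\<^esub> x = y \<otimes>\<^bsub>Gr G\<^esub> x \<otimes>\<^bsub>Gr G\<^esub> inv\<^bsub>Gr G\<^esub> x"
        using xc m_comm by simp
      also have "\<dots> = y" using xc by (simp add: m_assoc)
      finally have "x \<otimes>\<^bsub>Gr G\<^esub> y \<otimes>\<^bsub>Gr G\<^esub> inv\<^bsub>Gr G\<^esub> x = y" .
      hence "G (x, y) \<otimes>\<^bsub>Gr G\<^esub> inv\<^bsub>Gr G\<^esub> x \<otimes>\<^bsub>Gr G\<^esub> inv\<^bsub>Gr G\<^esub> y = y \<otimes>\<^bsub>Gr G\<^esub> inv\<^bsub>Gr G\<^esub> y"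
        using \<open>G (x, y) = x \<otimes>\<^bsub>Gr G\<^esub> y\<close> by simp
      thus ?thesis using xc by simp
    qed
    finally have "dot hs c v = 0" using v(1) by (simp add: consistent_def)
    moreover have "dot hs c v = (v l - v i) + - v j"
      unfolding c_def using dot_add[of hs "\<lambda>k. \<delta> l k + - \<delta> i k" "\<lambda>k. - \<delta> j k" v]
        dot2[of l i v] dot_neg[of hs "\<delta> j" v] ddelta[of j v] ijl by simp
    ultimately have "v l - v i - v j = 0" by simp
    thus ?thesis by (simp add: g_def i_def j_def l_def)
  qed
  obtain \<phi> :: "nat \<Rightarrow> rat" where phi: "bij \<phi>" "\<forall>x\<in>S. \<phi> x = g x"
    using extend_bij[OF finS injg] by blast
  have injp: "inj \<phi>" and surjp: "surj \<phi>" using phi(1) bij_is_inj bij_is_surj by blast+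
  have p0: "\<phi> 0 = 0" using phi(2) g0 by (simp add: S_def)
  define G' where "G' = (\<lambda>(a, b). inv_into UNIV \<phi> (\<phi> a + \<phi> b))"
  have pG: "\<phi> (G' (a, b)) = \<phi> a + \<phi> b" for a b
    unfolding G'_def using surjp by (simp add: surj_f_inv_f)
  have eqp: "x = y \<longleftrightarrow> \<phi> x = \<phi> y" for x y using injp by (simp add: inj_eq)
  have abG': "is_abgroup_op G'"
    unfolding is_abgroup_op_def
  proof (intro conjI allI)
    fix a b c
    show "G' (G' (a, b), c) = G' (a, G' (b, c))" by (subst eqp) (simp add: pG add.assoc)
    show "G' (a, b) = G' (b, a)" by (subst eqp) (simp add: pG add.commute)
    show "G' (0, a) = a" by (subst eqp) (simp add: pG p0)
    show "\<exists>b. G' (a, b) = 0"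
    proof
      show "G' (a, inv_into UNIV \<phi> (- \<phi> a)) = 0" by (subst eqp) (simp add: pG p0 surjp surj_f_inv_f)
    qed
  qed
  have pgm: "\<phi> (gmult G' m a) = of_nat m * \<phi> a" for m a
    by (induction m) (auto simp: pG p0 algebra_simps)
  have tfG': "torsion_free_op G'"
    unfolding torsion_free_op_def
  proof (intro allI impI)
    fix a m :: nat assume am: "a \<noteq> 0 \<and> m > 0"
    show "gmult G' m a \<noteq> 0"
    proof
      assume "gmult G' m a = 0"
      hence "of_nat m * \<phi> a = 0" using pgm[of m a] p0 by simp
      hence "\<phi> a = \<phi> 0" using am p0 by simp
      hence "a = 0" using injp by (simp add: inj_eq)
      thus False using am by simp
    qed
  qed
  have "G' \<in> Iso" using abG' tfG' pG phi(1) by (auto simp: Iso_def TFAb_def)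
  moreover have "\<forall>p\<in>K. G' p = G p"
  proof
    fix p assume p: "p \<in> K"
    obtain x y where xy: "p = (x, y)" by (cases p)
    have "x \<in> fst ` K" "y \<in> snd ` K" "G (x, y) \<in> G ` K" using p xy by (auto intro: rev_image_eqI)
    hence inS: "x \<in> S" "y \<in> S" "G (x, y) \<in> S" by (simp_all add: S_def)
    have "\<phi> (G' (x, y)) = \<phi> (G (x, y))" using pG phi(2) inS ghom p xy by simp
    thus "G' p = G p" using xy eqp by simp
  qed
  ultimately show ?thesis by blast
qed

lemma nowhere_dense_aux:
  fixes W :: "(nat \<times> nat \<Rightarrow> nat) set"
  assumes W: "open W" and dense: "\<And>G (K :: (nat \<times> nat) set). G \<in> TFAb \<Longrightarrow> finite K \<Longrightarrow> \<exists>G'\<in>TFAb \<inter> W. \<forall>p\<in>K. G' p = G p"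
    and A: "A \<subseteq> TFAb - W"
  shows "nowhere_dense_in (top_of_set TFAb) A"
proof -
  let ?X = "top_of_set TFAb"
  have cl: "closedin ?X (TFAb - W)"
  proof -
    have "closedin ?X (TFAb \<inter> (- W))" using W by (intro closedin_closed_Int) (simp add: closed_Compl)
    thus ?thesis by (simp add: Diff_eq)
  qed
  have "?X closure_of A \<subseteq> TFAb - W" using closure_of_minimal[OF A cl] .
  hence "?X interior_of (?X closure_of A) \<subseteq> ?X interior_of (TFAb - W)" by (rule interior_of_mono)
  moreover have "?X interior_of (TFAb - W) = {}"
    unfolding interior_of_eq_empty
  proof (intro allI impI)
    fix T assume T: "openin ?X T \<and> T \<subseteq> TFAb - W"
    show "T = {}"
    proof (rule ccontr)
      assume "T \<noteq> {}"
      then obtain G where GT: "G \<in> T" by blast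
      have "openin ?X T" using T by simp
      then obtain U where U: "open U" "T = TFAb \<inter> U" unfolding openin_open by blast
      have GT': "G \<in> TFAb" "G \<in> U" using GT U by auto
      obtain K where K: "finite K" "agree K G \<subseteq> U" using basic_nbhd[OF U(1) GT'(2)] by blast
      obtain G' where G': "G' \<in> TFAb \<inter> W" "\<forall>p\<in>K. G' p = G p" using dense[OF GT'(1) K(1)] by blast
      have "G' \<in> U" using K(2) G'(2) by (auto simp: agree_def)
      hence "G' \<in> T" using U G' by auto
      thus False using T G' by auto
    qed
  qed
  ultimately show ?thesis unfolding nowhere_dense_in_def by blast
qed

theorem theorem4p4:
  shows "comeager_in (top_of_set TFAb)
     {G \<in> TFAb. \<exists>f :: nat \<Rightarrow> rat. bij f \<and> (\<forall>a b. f (G (a, b)) = f a + f b)}"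
proof -
  have IsoE: "{G \<in> TFAb. \<exists>f :: nat \<Rightarrow> rat. bij f \<and> (\<forall>a b. f (G (a, b)) = f a + f b)} = Iso"
    by (simp add: Iso_def)
  define Bad where "Bad = TFAb - Iso"
  define F where "F = (\<lambda>n. Bad \<inter> (TFAb - Ob (Suc n))) ` UNIV \<union> (\<lambda>x. Bad \<inter> (TFAb - Pb x)) ` UNIV"
  have "countable F" by (simp add: F_def)
  moreover have "\<forall>S\<in>F. nowhere_dense_in (top_of_set TFAb) S"
  proof
    fix S assume "S \<in> F"
    then consider n where "S = Bad \<inter> (TFAb - Ob (Suc n))" | x where "S = Bad \<inter> (TFAb - Pb x)"
      by (auto simp: F_def)
    then show "nowhere_dense_in (top_of_set TFAb) S"
    proof cases
      case 1
      show ?thesis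
      proof (rule nowhere_dense_aux[OF open_Ob])
        fix G and K :: "(nat \<times> nat) set" assume "G \<in> TFAb" "finite K"
        then obtain G' where "G' \<in> Iso" "\<forall>p\<in>K. G' p = G p" using density by blast
        moreover have "G' \<in> TFAb \<inter> Ob (Suc n)" using \<open>G' \<in> Iso\<close> Iso_sub(1)[of G' "Suc n"] by (auto simp: Iso_def)
        ultimately show "\<exists>G'\<in>TFAb \<inter> Ob (Suc n). \<forall>p\<in>K. G' p = G p" by blast
      qed (use 1 in auto)
    next
      case 2
      show ?thesis
      proof (rule nowhere_dense_aux[OF open_Pb])
        fix G and K :: "(nat \<times> nat) set" assume "G \<in> TFAb" "finite K"
        then obtain G' where "G' \<in> Iso" "\<forall>p\<in>K. G' p = G p" using density by blast
        moreover have "G' \<in> TFAb \<inter> Pb x" using \<open>G' \<in> Iso\<close> Iso_sub(2)[of G' x] by (auto simp: Iso_def)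
        ultimately show "\<exists>G'\<in>TFAb \<inter> Pb x. \<forall>p\<in>K. G' p = G p" by blast
      qed (use 2 in auto)
    qed
  qed
  moreover have "topspace (top_of_set TFAb) - Iso = \<Union>F"
  proof
    show "\<Union>F \<subseteq> topspace (top_of_set TFAb) - Iso" by (auto simp: F_def Bad_def)
    show "topspace (top_of_set TFAb) - Iso \<subseteq> \<Union>F"
    proof
      fix G assume G: "G \<in> topspace (top_of_set TFAb) - Iso"
      hence GT: "G \<in> TFAb" "G \<notin> Iso" by auto
      have "(\<exists>n. n > 0 \<and> G \<notin> Ob n) \<or> (\<exists>x. G \<notin> Pb x)"
      proof (rule ccontr)
        assume "\<not> ((\<exists>n. n > 0 \<and> G \<notin> Ob n) \<or> (\<exists>x. G \<notin> Pb x))"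
        hence h1: "\<And>n. n > 0 \<Longrightarrow> G \<in> Ob n" and h2: "\<And>x. G \<in> Pb x" by blast+
        have "G \<in> Iso" using alg_main[OF GT(1) h1 h2] .
        with GT(2) show False by contradiction
      qed
      then show "G \<in> \<Union>F"
      proof
        assume "\<exists>n. n > 0 \<and> G \<notin> Ob n"
        then obtain n where "n > 0" "G \<notin> Ob n" by blast
        hence "G \<in> Bad \<inter> (TFAb - Ob (Suc (n - 1)))" using GT by (simp add: Bad_def)
        thus ?thesis unfolding F_def by blast
      next
        assume "\<exists>x. G \<notin> Pb x"
        then obtain x where "G \<notin> Pb x" by blast
        hence "G \<in> Bad \<inter> (TFAb - Pb x)" using GT by (simp add: Bad_def)
        thus ?thesis unfolding F_def by blast
      qed
    qed
  qed
  ultimately show ?thesis unfolding IsoE comeager_in_def by blast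
qed

end
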